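(* Let $h$ and $k$ be relatively prime odd integers with $k>0$. Then $$B_{1}(h,k)=h\,s_{5}(h,k)+\frac{1}{2k}-\frac{1}{2}.$$
   Context: $[x]$ denotes the greatest integer $\le x$, and the sawtooth function is $((x))=x-[x]-\tfrac12$ if $x\notin\mathbb{Z}$ and $((x))=0$ if $x\in\mathbb{Z}$. For integers $h,k$ with $k>0$, $\gcd(h,k)=1$: $$B_{1}(h,k)=\sum_{j=1}^{k-1}(-1)^{j+\left[\frac{hj}{k}\right]}\left[\frac{hj}{k}\right],\qquad s_{5}(h,k)=\sum_{j \bmod k}(-1)^{j+\left[\frac{hj}{k}\right]}\left(\left(\frac{j}{k}\right)\right),$$ the latter sum over a complete residue system modulo $k$ (the Hardy–Berndt sum $s_5$). *)

theory Defs
  imports Complex_Main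
begin

definition sawtooth :: "real \<Rightarrow> real" where
  "sawtooth x = (if x \<in> \<int> then 0 else x - of_int \<lfloor>x\<rfloor> - 1/2)"

definition B1 :: "int \<Rightarrow> int \<Rightarrow> int" where
  "B1 h k = (\<Sum>j\<in>{1..k-1}. (-1) ^ nat \<bar>j + \<lfloor>h * j / k\<rfloor>\<bar> * \<lfloor>h * j / k\<rfloor>)"

definition s5 :: "int \<Rightarrow> int \<Rightarrow> real" where
  "s5 h k = (\<Sum>j\<in>{0..k-1}. (-1) ^ nat \<bar>j + \<lfloor>h * j / k\<rfloor>\<bar> * sawtooth (j / k))"

end

theory Submission imports Defs begin
lemma sign_eq:
  fixes h k j :: int
  assumes "odd h" "odd k" "k > 0"
  shows "((-1::'a::ring_1) ^ nat \<bar>j + h*j div k\<bar>) = (-1) ^ nat (h*j mod k)"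
proof -
  have d: "h*j = k*(h*j div k) + h*j mod k" by simp
  have "even (j + h*j div k) \<longleftrightarrow> even (h*j mod k)"
    using assms d by (metis even_add even_mult_iff)
  moreover have "even (nat \<bar>x\<bar>) \<longleftrightarrow> even x" for x :: int
    by (simp add: even_nat_iff)
  moreover have "h*j mod k \<ge> 0" using assms by auto
  ultimately have "even (nat \<bar>j + h*j div k\<bar>) \<longleftrightarrow> even (nat (h*j mod k))"
    by (simp add: even_nat_iff)
  then show ?thesis
    by (simp add: minus_one_power_iff)
qed
lemma alt_sum:
  fixes c :: int
  shows "(\<Sum>r\<in>{1..2*int m}. (-1::int) ^ nat r * (2*r - c)) = 2 * int m"
proof (induction m)
  case 0 then show ?case by simp
next
  case (Suc m)
  have e: "{1..2*int (Suc m)} = insert (2*int m+2) (insert (2*int m+1) {1..2*int m})" by auto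
  have p1: "(-1::int) ^ nat (2*int m+2) = 1"
    by (simp add: even_nat_iff minus_one_power_iff)
  have p2: "(-1::int) ^ nat (2*int m+1) = -1"
    by (simp add: even_nat_iff)
  show ?case using Suc p1 p2 unfolding e by simp
qed

lemma perm:
  fixes h k :: int
  assumes "k > 0" "coprime h k"
  shows "(\<lambda>j. h*j mod k) ` {1..k-1} = {1..k-1}" "inj_on (\<lambda>j. h*j mod k) {1..k-1}"
proof -
  show inj: "inj_on (\<lambda>j. h*j mod k) {1..k-1}"
  proof
    fix a b assume a: "a \<in> {1..k-1}" and b: "b \<in> {1..k-1}" and e: "h*a mod k = h*b mod k"
    have "k dvd h*(a-b)" using e by (metis mod_eq_dvd_iff right_diff_distrib)
    then have "k dvd (a-b)" using assms(2) by (metis coprime_commute coprime_dvd_mult_right_iff)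
    show "a = b"
    proof (rule ccontr)
      assume "a \<noteq> b"
      then have "\<bar>k\<bar> \<le> \<bar>a-b\<bar>" using \<open>k dvd (a-b)\<close> dvd_imp_le_int by auto
      then show False using a b assms(1) by auto
    qed
  qed
  have "(\<lambda>j. h*j mod k) ` {1..k-1} \<subseteq> {1..k-1}"
  proof
    fix x assume "x \<in> (\<lambda>j. h*j mod k) ` {1..k-1}"
    then obtain j where j: "j \<in> {1..k-1}" "x = h*j mod k" by auto
    have "\<not> k dvd j" using j by (auto dest: zdvd_imp_le)
    then have "\<not> k dvd h*j" using assms(2) by (metis coprime_commute coprime_dvd_mult_right_iff)
    then have "x \<noteq> 0" using j by (simp add: dvd_eq_mod_eq_0)
    moreover have "0 \<le> x" "x < k" using j assms by auto
    ultimately show "x \<in> {1..k-1}" by auto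
  qed
  then show "(\<lambda>j. h*j mod k) ` {1..k-1} = {1..k-1}"
    using inj by (simp add: endo_inj_surj)
qed

theorem theorem12:
  fixes h k :: int
  assumes "odd h" "odd k" "k > 0" "coprime h k"
  shows "real_of_int (B1 h k) = real_of_int h * s5 h k + 1 / (2 * real_of_int k) - 1 / 2"
proof -
  define K where "K = {1..k-1}"
  define e where "e j = ((-1::int) ^ nat (h*j mod k))" for j
  have fl: "\<lfloor>real_of_int (h * j) / real_of_int k\<rfloor> = h*j div k" for j
    by (rule floor_divide_of_int_eq)
  have B: "B1 h k = (\<Sum>j\<in>K. e j * (h*j div k))"
    unfolding B1_def K_def e_def fl
    by (intro sum.cong refl) (metis sign_eq[OF assms(1-3)])
  have saw: "sawtooth (real_of_int j / real_of_int k) = real_of_int j / real_of_int k - 1/2"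
    if "j \<in> K" for j
  proof -
    have lt: "0 < real_of_int j / real_of_int k" "real_of_int j / real_of_int k < 1"
      using that assms(3) by (auto simp: K_def divide_less_eq)
    then have "real_of_int j / real_of_int k \<notin> \<int>"
      by (metis Ints_cases of_int_0_less_iff of_int_less_1_iff not_less zero_less_iff_neq_zero le_less_trans less_le_not_le zero_less_one int_one_le_iff_zero_less)
    moreover have "\<lfloor>real_of_int j / real_of_int k\<rfloor> = 0" using lt by linarith
    ultimately show ?thesis by (simp add: sawtooth_def)
  qed
  have z: "{0..k-1} = insert 0 K" using assms(3) by (auto simp: K_def)
  have S0: "s5 h k = (\<Sum>j\<in>insert 0 K. (-1) ^ nat \<bar>j + h*j div k\<bar> * sawtooth (real_of_int j / real_of_int k))"
    unfolding s5_def z fl ..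
  also have "\<dots> = (\<Sum>j\<in>K. (-1) ^ nat \<bar>j + h*j div k\<bar> * sawtooth (real_of_int j / real_of_int k))"
    by (subst sum.insert) (auto simp: K_def sawtooth_def)
  also have "\<dots> = (\<Sum>j\<in>K. real_of_int (e j) * (real_of_int j / real_of_int k - 1/2))"
  proof (intro sum.cong refl)
    fix j assume j: "j \<in> K"
    show "(-1) ^ nat \<bar>j + h*j div k\<bar> * sawtooth (real_of_int j / real_of_int k) = real_of_int (e j) * (real_of_int j / real_of_int k - 1/2)"
      by (simp only: saw[OF j] e_def of_int_power of_int_minus of_int_1 sign_eq[OF assms(1-3)])
  qed
  finally have S: "s5 h k = (\<Sum>j\<in>K. real_of_int (e j) * (real_of_int j / real_of_int k - 1/2))" .
  have tm: "real_of_int (e j * (h*j div k)) = real_of_int h * (real_of_int (e j) * (real_of_int j / real_of_int k - 1/2))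
        - real_of_int (e j * (2*(h*j mod k) - h*k)) / (2 * real_of_int k)" for j
  proof -
    have d0: "real_of_int (h*j div k) * real_of_int k + real_of_int (h*j mod k) = real_of_int h * real_of_int j"
    proof -
      have "real_of_int (h*j div k * k + h*j mod k) = real_of_int (h*j)" by (simp only: div_mult_mod_eq)
      then show ?thesis by (simp only: of_int_add of_int_mult)
    qed
    have kz: "real_of_int k \<noteq> 0" using assms(3) by simp
    have "real_of_int (e j) * 2 * (real_of_int (h*j div k) * real_of_int k + real_of_int (h*j mod k)) = real_of_int (e j) * 2 * (real_of_int h * real_of_int j)"
      using d0 by simp
    then show ?thesis using kz by (simp add: field_simps)
  qed
  have E: "e j = (-1) ^ nat (h*j mod k)" for j by (simp add: e_def)
  have R: "(\<Sum>j\<in>K. e j * (2*(h*j mod k) - h*k)) = (\<Sum>r\<in>K. (-1) ^ nat r * (2*r - h*k))"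
  proof -
    define g where "g r = (-1::int) ^ nat r * (2*r - h*k)" for r
    have inj: "inj_on (\<lambda>j. h*j mod k) K" using perm[OF assms(3,4)] by (simp add: K_def)
    have im: "(\<lambda>j. h*j mod k) ` K = K" using perm[OF assms(3,4)] by (simp add: K_def)
    have "(\<Sum>j\<in>K. e j * (2*(h*j mod k) - h*k)) = (\<Sum>j\<in>K. g (h*j mod k))" by (simp add: e_def g_def)
    also have "\<dots> = sum g ((\<lambda>j. h*j mod k) ` K)" using sum.reindex[OF inj, of g] by (simp add: comp_def)
    also have "\<dots> = sum g K" by (simp only: im)
    finally show ?thesis by (simp add: g_def)
  qed
  obtain t where t: "k = 2*t + 1" using assms(2) by (rule oddE)
  have "t \<ge> 0" using t assms(3) by simp
  then have m: "k - 1 = 2 * int (nat t)" using t by simp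
  have R2: "(\<Sum>j\<in>K. e j * (2*(h*j mod k) - h*k)) = k - 1"
    by (simp only: R) (simp only: K_def m alt_sum)
  have "real_of_int (B1 h k) = real_of_int h * s5 h k - real_of_int (\<Sum>j\<in>K. e j * (2*(h*j mod k) - h*k)) / (2 * real_of_int k)"
    unfolding B S of_int_sum tm by (simp add: sum_subtractf sum_distrib_left sum_divide_distrib)
  also have "\<dots> = real_of_int h * s5 h k + 1 / (2 * real_of_int k) - 1 / 2"
    unfolding R2 using assms(3) by (simp add: field_simps)
  finally show ?thesis .
qed
end
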